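(* Let $(X,d,\ll,\le,\tau)$ be a Lorentzian length space. Then for every $x\in X$, $\overline{I^+(x)}=\{y\in X: I^+(y)\subset I^+(x)\}$ and $\overline{I^-(x)}=\{y\in X: I^-(y)\subset I^-(x)\}$, where closures are taken in the topology of $d$.
   Context: A causal space $(X,\ll,\le)$ is a set $X$ with two transitive relations $\ll,\le$ such that $\le$ is reflexive and $x\ll y\Rightarrow x\le y$; write $p<q$ if $p\le q$ and $p\neq q$. Set $I^+(x)=\{y: x\ll y\}$, $I^-(x)=\{y: y\ll x\}$, $J^+(x)=\{y:x\le y\}$, $J^-(x)=\{y:y\le x\}$. A Lorentzian pre-length space $(X,d,\ll,\le,\tau)$ is a causal space together with a metric $d$ on $X$ and a function $\tau:X\times X\to[0,\infty]$ that is lower semicontinuous with respect to the topology of $d$, satisfies $\tau(x,z)\ge\tau(x,y)+\tau(y,z)$ whenever $x\le y\le z$, $\tau(x,y)=0$ if $x\not\le y$, and $\tau(x,y)>0\iff x\ll y$. All topological notions refer to the metric topology of $d$. A future directed causal (resp. timelike) curve is a non-constant Lipschitz map $\gamma:I\to X$ ($I\subset\mathbb R$ an interval) with $\gamma(s)\le\gamma(t)$ (resp. $\gamma(s)\ll\gamma(t)$) for all $s<t$. For a future directed causal $\gamma:[a,b]\to X$, $L_\tau(\gamma)=\inf\sum_{i=0}^{N-1}\tau(\gamma(t_i),\gamma(t_{i+1}))$ over all partitions $a=t_0<\dots<t_N=b$. The space is causally path connected if whenever $x\le y$ (resp. $x\ll y$) there is a future directed causal (resp. timelike) curve from $x$ to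 $y$. For open $U\subset X$, $p\le_U q$ means there is a future directed causal curve from $p$ to $q$ with image in $U$. A neighborhood $U$ is causally closed if whenever $p_n\le_U q_n$ with $p_n\to p\in U$, $q_n\to q\in U$, then $p\le_U q$; the space is locally causally closed if every point has a causally closed neighborhood. The space is localizable if every $x$ has a neighborhood $\Omega_x$ such that: (i) all causal curves contained in $\Omega_x$ have uniformly bounded $d$-length; (ii) there is a continuous $\omega_x:\Omega_x\times\Omega_x\to[0,\infty)$ such that $(\Omega_x,d|_{\Omega_x\times\Omega_x},\ll|_{\Omega_x},\le|_{\Omega_x},\omega_x)$ is a Lorentzian pre-length space, and $I^\pm(y)\cap\Omega_x\ne\emptyset$ for every $y\in\Omega_x$; (iii) for all $p,q\in\Omega_x$ with $p<q$ there is a future causal curve $\gamma_{p,q}$ from $p$ to $q$ with $L_\tau(\gamma_{p,q})\ge L_\tau(\gamma)$ for every future causal curve $\gamma\subset\Omega_x$ from $p$ to $q$, and $L_\tau(\gamma_{p,q})=\omega_x(p,q)$. A Lorentzian length space is a causally path connected, locally causally closed, localizable Lorentzian pre-length space with $\tau(x,y)=\sup\{L_\tau(\gamma):\gamma$ a future causal curve from $x$ to $y\}$. *)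

theory Defs
  imports "HOL-Analysis.Analysis"
begin

text \<open>The ambient set X is a type 'a of class metric_space; the metric d is dist.
  Relations are binary predicates: ll = timelike relation, le = causal relation.
  The time separation tau takes values in [0,\<infinity>] = ennreal.\<close>

definition causal_space_on :: "'a set \<Rightarrow> ('a \<Rightarrow> 'a \<Rightarrow> bool) \<Rightarrow> ('a \<Rightarrow> 'a \<Rightarrow> bool) \<Rightarrow> bool" where
  "causal_space_on S ll le \<longleftrightarrow>
     (\<forall>x\<in>S. \<forall>y\<in>S. \<forall>z\<in>S. ll x y \<longrightarrow> ll y z \<longrightarrow> ll x z) \<and>
     (\<forall>x\<in>S. \<forall>y\<in>S. \<forall>z\<in>S. le x y \<longrightarrow> le y z \<longrightarrow> le x z) \<and>
     (\<forall>x\<in>S. le x x) \<and>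
     (\<forall>x\<in>S. \<forall>y\<in>S. ll x y \<longrightarrow> le x y)"

definition lsc_on :: "'b::topological_space set \<Rightarrow> ('b \<Rightarrow> ennreal) \<Rightarrow> bool" where
  "lsc_on S f \<longleftrightarrow> (\<forall>p\<in>S. \<forall>c. c < f p \<longrightarrow> (\<forall>\<^sub>F q in at p within S. c < f q))"

definition lpls_on :: "'a::metric_space set \<Rightarrow> ('a \<Rightarrow> 'a \<Rightarrow> bool) \<Rightarrow> ('a \<Rightarrow> 'a \<Rightarrow> bool)
    \<Rightarrow> ('a \<Rightarrow> 'a \<Rightarrow> ennreal) \<Rightarrow> bool" where
  "lpls_on S ll le tau \<longleftrightarrow>
     causal_space_on S ll le \<and>
     lsc_on (S \<times> S) (\<lambda>(x, y). tau x y) \<and>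
     (\<forall>x\<in>S. \<forall>y\<in>S. \<forall>z\<in>S. le x y \<longrightarrow> le y z \<longrightarrow> tau x y + tau y z \<le> tau x z) \<and>
     (\<forall>x\<in>S. \<forall>y\<in>S. \<not> le x y \<longrightarrow> tau x y = 0) \<and>
     (\<forall>x\<in>S. \<forall>y\<in>S. 0 < tau x y \<longleftrightarrow> ll x y)"

definition fd_curve :: "('a::metric_space \<Rightarrow> 'a \<Rightarrow> bool) \<Rightarrow> real set \<Rightarrow> (real \<Rightarrow> 'a) \<Rightarrow> bool" where
  "fd_curve R I g \<longleftrightarrow>
     is_interval I \<and> (\<exists>C. C-lipschitz_on I g) \<and> (\<exists>s\<in>I. \<exists>t\<in>I. g s \<noteq> g t) \<and>
     (\<forall>s\<in>I. \<forall>t\<in>I. s < t \<longrightarrow> R (g s) (g t))"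

definition fd_curve_from_to :: "('a::metric_space \<Rightarrow> 'a \<Rightarrow> bool) \<Rightarrow> (real \<Rightarrow> 'a) \<Rightarrow> real \<Rightarrow> real
    \<Rightarrow> 'a \<Rightarrow> 'a \<Rightarrow> bool" where
  "fd_curve_from_to R g a b x y \<longleftrightarrow> a < b \<and> fd_curve R {a..b} g \<and> g a = x \<and> g b = y"

definition partitions :: "real \<Rightarrow> real \<Rightarrow> (nat \<times> (nat \<Rightarrow> real)) set" where
  "partitions a b = {(N, t). 0 < N \<and> t 0 = a \<and> t N = b \<and> (\<forall>i<N. t i < t (Suc i))}"

definition L_tau :: "('a \<Rightarrow> 'a \<Rightarrow> ennreal) \<Rightarrow> (real \<Rightarrow> 'a) \<Rightarrow> real \<Rightarrow> real \<Rightarrow> ennreal" where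
  "L_tau tau g a b = (INF (N, t) \<in> partitions a b. \<Sum>i<N. tau (g (t i)) (g (t (Suc i))))"

definition d_length :: "real set \<Rightarrow> (real \<Rightarrow> 'a::metric_space) \<Rightarrow> ennreal" where
  "d_length I g = (SUP (N, t) \<in> {(N, t). (\<forall>i\<le>N. t i \<in> I) \<and> (\<forall>i<N. t i \<le> t (Suc i))}.
      \<Sum>i<N. ennreal (dist (g (t i)) (g (t (Suc i)))))"

definition causally_path_connected :: "('a::metric_space \<Rightarrow> 'a \<Rightarrow> bool) \<Rightarrow> ('a \<Rightarrow> 'a \<Rightarrow> bool) \<Rightarrow> bool" where
  "causally_path_connected ll le \<longleftrightarrow>
     (\<forall>x y. le x y \<and> x \<noteq> y \<longrightarrow> (\<exists>g a b. fd_curve_from_to le g a b x y)) \<and>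
     (\<forall>x y. ll x y \<longrightarrow> (\<exists>g a b. fd_curve_from_to ll g a b x y))"

definition causal_in :: "('a::metric_space \<Rightarrow> 'a \<Rightarrow> bool) \<Rightarrow> 'a set \<Rightarrow> 'a \<Rightarrow> 'a \<Rightarrow> bool" where
  "causal_in le U p q \<longleftrightarrow> p = q \<or> (\<exists>g a b. fd_curve_from_to le g a b p q \<and> g ` {a..b} \<subseteq> U)"

definition causally_closed :: "('a::metric_space \<Rightarrow> 'a \<Rightarrow> bool) \<Rightarrow> 'a set \<Rightarrow> bool" where
  "causally_closed le U \<longleftrightarrow>
     (\<forall>p q P Q. (\<forall>n. causal_in le U (P n) (Q n)) \<and> P \<longlonglongrightarrow> p \<and> Q \<longlonglongrightarrow> q \<and> p \<in> U \<and> q \<in> U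
        \<longrightarrow> causal_in le U p q)"

definition locally_causally_closed :: "('a::metric_space \<Rightarrow> 'a \<Rightarrow> bool) \<Rightarrow> bool" where
  "locally_causally_closed le \<longleftrightarrow> (\<forall>x. \<exists>U. open U \<and> x \<in> U \<and> causally_closed le U)"

definition localizable :: "('a::metric_space \<Rightarrow> 'a \<Rightarrow> bool) \<Rightarrow> ('a \<Rightarrow> 'a \<Rightarrow> bool)
    \<Rightarrow> ('a \<Rightarrow> 'a \<Rightarrow> ennreal) \<Rightarrow> bool" where
  "localizable ll le tau \<longleftrightarrow> (\<forall>x. \<exists>\<Omega> (\<omega> :: 'a \<Rightarrow> 'a \<Rightarrow> real).
     (\<exists>V. open V \<and> x \<in> V \<and> V \<subseteq> \<Omega>) \<and>
     \<comment> \<open>(i)\<close>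
     (\<exists>C::real. \<forall>I g. fd_curve le I g \<and> g ` I \<subseteq> \<Omega> \<longrightarrow> d_length I g \<le> ennreal C) \<and>
     \<comment> \<open>(ii)\<close>
     continuous_on (\<Omega> \<times> \<Omega>) (\<lambda>(p, q). \<omega> p q) \<and> (\<forall>p\<in>\<Omega>. \<forall>q\<in>\<Omega>. 0 \<le> \<omega> p q) \<and>
     lpls_on \<Omega> ll le (\<lambda>p q. ennreal (\<omega> p q)) \<and>
     (\<forall>y\<in>\<Omega>. (\<exists>z\<in>\<Omega>. ll y z) \<and> (\<exists>z\<in>\<Omega>. ll z y)) \<and>
     \<comment> \<open>(iii)\<close>
     (\<forall>p\<in>\<Omega>. \<forall>q\<in>\<Omega>. le p q \<and> p \<noteq> q \<longrightarrow>
        (\<exists>g a b. fd_curve_from_to le g a b p q \<and>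
           (\<forall>h c e. fd_curve_from_to le h c e p q \<and> h ` {c..e} \<subseteq> \<Omega> \<longrightarrow> L_tau tau h c e \<le> L_tau tau g a b) \<and>
           L_tau tau g a b = ennreal (\<omega> p q))))"

definition lorentzian_length_space :: "('a::metric_space \<Rightarrow> 'a \<Rightarrow> bool) \<Rightarrow> ('a \<Rightarrow> 'a \<Rightarrow> bool)
    \<Rightarrow> ('a \<Rightarrow> 'a \<Rightarrow> ennreal) \<Rightarrow> bool" where
  "lorentzian_length_space ll le tau \<longleftrightarrow>
     lpls_on UNIV ll le tau \<and> causally_path_connected ll le \<and> locally_causally_closed le \<and>
     localizable ll le tau \<and>
     (\<forall>x y. tau x y = (SUP (g, a, b) \<in> {(g, a, b). fd_curve_from_to le g a b x y}. L_tau tau g a b))"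

end

theory Submission
  imports Defs
begin

lemma tau_open1:
  assumes L: "lpls_on UNIV ll le tau" and yz: "ll y z"
  shows "\<exists>d>0. \<forall>w. dist w y < d \<longrightarrow> ll w z"
proof -
  have pos: "\<forall>x y. 0 < tau x y \<longleftrightarrow> ll x y" using L unfolding lpls_on_def by auto
  have "lsc_on (UNIV \<times> UNIV) (\<lambda>(x, y). tau x y)" using L unfolding lpls_on_def by auto
  then have "\<forall>\<^sub>F q in at (y,z) within UNIV. 0 < (\<lambda>(x, y). tau x y) q"
    unfolding lsc_on_def using pos yz by fastforce
  then obtain d where d: "d>0" "\<forall>q\<in>UNIV. q \<noteq> (y,z) \<and> dist q (y,z) < d \<longrightarrow> 0 < (\<lambda>(x, y). tau x y) q"
    unfolding eventually_at by blast
  show ?thesis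
  proof (intro exI[of _ d] conjI allI impI)
    fix w assume "dist w y < d"
    then show "ll w z" using d yz pos[rule_format, of w z]
      by (cases "w = y") (auto simp: dist_Pair_Pair)
  qed (use d in auto)
qed

lemma tau_open2:
  assumes L: "lpls_on UNIV ll le tau" and yz: "ll z y"
  shows "\<exists>d>0. \<forall>w. dist w y < d \<longrightarrow> ll z w"
proof -
  have pos: "\<forall>x y. 0 < tau x y \<longleftrightarrow> ll x y" using L unfolding lpls_on_def by auto
  have "lsc_on (UNIV \<times> UNIV) (\<lambda>(x, y). tau x y)" using L unfolding lpls_on_def by auto
  then have "\<forall>\<^sub>F q in at (z,y) within UNIV. 0 < (\<lambda>(x, y). tau x y) q"
    unfolding lsc_on_def using pos yz by fastforce
  then obtain d where d: "d>0" "\<forall>q\<in>UNIV. q \<noteq> (z,y) \<and> dist q (z,y) < d \<longrightarrow> 0 < (\<lambda>(x, y). tau x y) q"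
    unfolding eventually_at by blast
  show ?thesis
  proof (intro exI[of _ d] conjI allI impI)
    fix w assume "dist w y < d"
    then show "ll z w" using d yz pos[rule_format, of z w]
      by (cases "w = y") (auto simp: dist_Pair_Pair)
  qed (use d in auto)
qed

lemma curve_near:
  assumes F: "fd_curve_from_to R g a b p q" and e: "e > 0"
  shows "\<exists>t. R p (g t) \<and> dist (g t) p < e"
    and "\<exists>t. R (g t) q \<and> dist (g t) q < e"
proof -
  have ab: "a < b" and ga: "g a = p" and gb: "g b = q" and fc: "fd_curve R {a..b} g"
    using F unfolding fd_curve_from_to_def by auto
  obtain C where C: "C-lipschitz_on {a..b} g" using fc unfolding fd_curve_def by auto
  have C0: "0 \<le> C" and Cl: "\<And>s t. s \<in> {a..b} \<Longrightarrow> t \<in> {a..b} \<Longrightarrow> dist (g s) (g t) \<le> C * dist s t"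
    using C unfolding lipschitz_on_def by auto
  have R: "\<And>s t. s \<in> {a..b} \<Longrightarrow> t \<in> {a..b} \<Longrightarrow> s < t \<Longrightarrow> R (g s) (g t)"
    using fc unfolding fd_curve_def by auto
  define h where "h = min (b - a) (e / (C + 1)) / 2"
  have h0: "0 < h" using ab e C0 by (simp add: h_def)
  have hb: "h < b - a" using ab e C0 h0 by (simp add: h_def)
  have he: "C * h < e"
  proof -
    have "h \<le> e / (C+1) / 2" unfolding h_def by (intro divide_right_mono) auto
    then have "C * h \<le> C * (e / (C+1) / 2)" using C0 by (rule mult_left_mono)
    also have "\<dots> < e" using C0 e by (simp add: field_simps add_nonneg_pos)
    finally show ?thesis .
  qed
  show "\<exists>t. R p (g t) \<and> dist (g t) p < e"
  proof (intro exI conjI)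
    show "R p (g (a + h))" using R[of a "a+h"] ab h0 hb ga by auto
    have "dist (g (a+h)) (g a) \<le> C * dist (a+h) a" using Cl[of "a+h" a] ab h0 hb by auto
    also have "\<dots> = C * h" using h0 by (simp add: dist_real_def)
    finally show "dist (g (a + h)) p < e" using he ga by simp
  qed
  show "\<exists>t. R (g t) q \<and> dist (g t) q < e"
  proof (intro exI conjI)
    show "R (g (b - h)) q" using R[of "b-h" b] ab h0 hb gb by auto
    have "dist (g (b-h)) (g b) \<le> C * dist (b-h) b" using Cl[of "b-h" b] ab h0 hb by auto
    also have "\<dots> = C * h" using h0 by (simp add: dist_real_def)
    finally show "dist (g (b - h)) q < e" using he gb by simp
  qed
qed

theorem proposition2p19:
  fixes ll le :: "'a::metric_space \<Rightarrow> 'a \<Rightarrow> bool" and tau :: "'a \<Rightarrow> 'a \<Rightarrow> ennreal" and x :: 'a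
  assumes "lorentzian_length_space ll le tau"
  shows "closure {y. ll x y} = {y. {z. ll y z} \<subseteq> {z. ll x z}} \<and>
         closure {y. ll y x} = {y. {z. ll z y} \<subseteq> {z. ll z x}}"
proof -
  have L: "lpls_on UNIV ll le tau" and cpc: "causally_path_connected ll le"
    and loc: "localizable ll le tau"
    using assms unfolding lorentzian_length_space_def by auto
  have tr: "\<And>a b c. ll a b \<Longrightarrow> ll b c \<Longrightarrow> ll a c"
  proof -
    fix a b c assume "ll a b" "ll b c"
    have "causal_space_on UNIV ll le" using L unfolding lpls_on_def by simp
    then show "ll a c" unfolding causal_space_on_def using \<open>ll a b\<close> \<open>ll b c\<close> by blast
  qed
  have fut: "\<exists>z. ll y z" and past: "\<exists>z. ll z y" for y
  proof -
    obtain \<Omega> :: "'a set" and \<omega> :: "'a \<Rightarrow> 'a \<Rightarrow> real" where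
      V: "\<exists>V. open V \<and> y \<in> V \<and> V \<subseteq> \<Omega>" and
      P: "\<forall>y\<in>\<Omega>. (\<exists>z\<in>\<Omega>. ll y z) \<and> (\<exists>z\<in>\<Omega>. ll z y)"
      using loc[unfolded localizable_def, rule_format, of y] by (elim exE conjE) blast
    have "y \<in> \<Omega>" using V by blast
    then show "\<exists>z. ll y z" "\<exists>z. ll z y" using P by blast+
  qed
  have tlc: "\<And>p q. ll p q \<Longrightarrow> \<exists>g a b. fd_curve_from_to ll g a b p q"
    using cpc unfolding causally_path_connected_def by blast
  have A: "closure {y. ll x y} = {y. {z. ll y z} \<subseteq> {z. ll x z}}"
  proof (intro set_eqI iffI)
    fix y assume "y \<in> closure {y. ll x y}"
    then have cl: "\<forall>e>0. \<exists>w\<in>{y. ll x y}. dist w y < e" by (simp add: closure_approachable)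
    show "y \<in> {y. {z. ll y z} \<subseteq> {z. ll x z}}"
    proof (safe)
      fix z assume "ll y z"
      then obtain d where "d>0" "\<forall>w. dist w y < d \<longrightarrow> ll w z" using tau_open1[OF L] by blast
      then obtain w where "ll x w" "dist w y < d" using cl by blast
      then show "ll x z" using tr `\<forall>w. dist w y < d \<longrightarrow> ll w z` by blast
    qed
  next
    fix y assume y: "y \<in> {y. {z. ll y z} \<subseteq> {z. ll x z}}"
    obtain z where "ll y z" using fut by blast
    then obtain g a b where F: "fd_curve_from_to ll g a b y z" using tlc by blast
    show "y \<in> closure {y. ll x y}"
      unfolding closure_approachable
    proof (intro allI impI)
      fix e :: real assume "e > 0"
      then obtain t where "ll y (g t)" "dist (g t) y < e" using curve_near(1)[OF F] by blast
      then show "\<exists>w\<in>{y. ll x y}. dist w y < e" using y by blast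
    qed
  qed
  have B: "closure {y. ll y x} = {y. {z. ll z y} \<subseteq> {z. ll z x}}"
  proof (intro set_eqI iffI)
    fix y assume "y \<in> closure {y. ll y x}"
    then have cl: "\<forall>e>0. \<exists>w\<in>{y. ll y x}. dist w y < e" by (simp add: closure_approachable)
    show "y \<in> {y. {z. ll z y} \<subseteq> {z. ll z x}}"
    proof (safe)
      fix z assume "ll z y"
      then obtain d where "d>0" "\<forall>w. dist w y < d \<longrightarrow> ll z w" using tau_open2[OF L] by blast
      then obtain w where "ll w x" "dist w y < d" using cl by blast
      then show "ll z x" using tr `\<forall>w. dist w y < d \<longrightarrow> ll z w` by blast
    qed
  next
    fix y assume y: "y \<in> {y. {z. ll z y} \<subseteq> {z. ll z x}}"
    obtain z where "ll z y" using past by blast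
    then obtain g a b where F: "fd_curve_from_to ll g a b z y" using tlc by blast
    show "y \<in> closure {y. ll y x}"
      unfolding closure_approachable
    proof (intro allI impI)
      fix e :: real assume "e > 0"
      then obtain t where "ll (g t) y" "dist (g t) y < e" using curve_near(2)[OF F] by blast
      then show "\<exists>w\<in>{y. ll y x}. dist w y < e" using y by blast
    qed
  qed
  show ?thesis using A B by blast
qed

end
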